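(* Let $n\ge2$. Consider a continuous auction (first-price or all-pay) in which each of $n$ risk-neutral bidders has a private value drawn independently from a continuous CDF $F_C$ with support $[\underline v,\bar v]$, bids may be any nonnegative real number, and there is a symmetric Bayes–Nash equilibrium in which every bidder uses the same strictly increasing bidding function $\beta_C:[\underline v,\bar v]\to\mathbb R_{\ge0}$. Let $\delta>0$ be such that $(\bar v-\underline v)/\delta$ is a positive integer, and define the discrete analogue as follows: values are drawn independently from the distribution $F_D$ on $V=\{\underline v-\delta,\underline v,\underline v+\delta,\dots,\bar v-\delta\}$ given by $F_D(v)=\Pr(\text{value}\le v)=F_C(v+\delta)$ for $v\in V$ (so $F_D(\underline v-\delta)=0$, $F_D(\bar v-\delta)=1$); the permissible bids are $B=\{\beta_C(\underline v),\beta_C(\underline v+\delta),\dots,\beta_C(\bar v)\}$; and a bidder wins only if their bid is strictly higher than all other bids (if the highest bid is tied, nobody wins). Then, in both the discrete first-price auction and the discrete all-pay auction so defined, the profile in which every bidder with value $v$ bids $\beta_C(v)$ (for every value $v$ occurring with positive probability, i.e. $v\in\{\underline v,\dots,\bar v-\delta\}$) is a symmetric pure-strategy Bayes–Nash equilibrium.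
   Context: In the first-price auction a bidder with value $v$ bidding $b$ gets expected payoff $(v-b)\Pr(\text{win})$; in the all-pay auction the expected payoff is $v\Pr(\text{win})-b$. In the continuous auction ties occur with probability zero under the strictly increasing equilibrium $\beta_C$. *)

theory Defs
  imports "HOL-Probability.Probability"
begin

datatype auction_format = FirstPrice | AllPay

fun payoff :: "auction_format \<Rightarrow> real \<Rightarrow> real \<Rightarrow> real \<Rightarrow> real" where
  "payoff FirstPrice v b p = (v - b) * p"
| "payoff AllPay v b p = v * p - b"

text \<open>Continuous auction: values i.i.d. with distribution M (CDF F_C = cdf M), supported
  on [vl, vh]; the n - 1 opponents bid beta of their values.  A bid b wins iff it is
  strictly above every opponent's bid; by independence the winning probability is
  Pr(beta(w) < b)^(n-1).\<close>
definition cont_win_prob ::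
  "real measure \<Rightarrow> nat \<Rightarrow> real \<Rightarrow> real \<Rightarrow> (real \<Rightarrow> real) \<Rightarrow> real \<Rightarrow> real" where
  "cont_win_prob M n vl vh beta b = (measure M {w \<in> {vl..vh}. beta w < b}) ^ (n - 1)"

definition cont_symmetric_BNE ::
  "auction_format \<Rightarrow> real measure \<Rightarrow> nat \<Rightarrow> real \<Rightarrow> real \<Rightarrow> (real \<Rightarrow> real) \<Rightarrow> bool" where
  "cont_symmetric_BNE fmt M n vl vh beta \<longleftrightarrow>
     (\<forall>v \<in> {vl..vh}. \<forall>b \<ge> 0.
        payoff fmt v b (cont_win_prob M n vl vh beta b)
          \<le> payoff fmt v (beta v) (cont_win_prob M n vl vh beta (beta v)))"

text \<open>Discrete analogue.  V = {vl - delta, vl, ..., vh - delta}; the k-th point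
  (k = 0..K, K = (vh - vl)/delta) is vl + (k - 1) delta.\<close>
definition disc_value :: "real \<Rightarrow> real \<Rightarrow> nat \<Rightarrow> real" where
  "disc_value vl delta k = vl + (real k - 1) * delta"

definition disc_cdf :: "real measure \<Rightarrow> real \<Rightarrow> real \<Rightarrow> real" where
  "disc_cdf M delta v = cdf M (v + delta)"

definition disc_pmf :: "real measure \<Rightarrow> real \<Rightarrow> real \<Rightarrow> nat \<Rightarrow> real" where
  "disc_pmf M vl delta k =
     disc_cdf M delta (disc_value vl delta k)
       - (if k = 0 then 0 else disc_cdf M delta (disc_value vl delta (k - 1)))"

definition disc_bids :: "(real \<Rightarrow> real) \<Rightarrow> real \<Rightarrow> real \<Rightarrow> nat \<Rightarrow> real set" where
  "disc_bids beta vl delta K = {beta (vl + real j * delta) | j. j \<le> K}"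

text \<open>Winning probability of bid b in the discrete auction when the opponents follow
  the profile value v_j \<mapsto> beta(v_j), j = 1..K (the value v_0 = vl - delta has
  probability F_C(vl) = 0 and does not contribute).\<close>
definition disc_win_prob ::
  "real measure \<Rightarrow> nat \<Rightarrow> real \<Rightarrow> real \<Rightarrow> nat \<Rightarrow> (real \<Rightarrow> real) \<Rightarrow> real \<Rightarrow> real" where
  "disc_win_prob M n vl delta K beta b =
     (\<Sum>j\<in>{1..K}. if beta (disc_value vl delta j) < b then disc_pmf M vl delta j else 0)
       ^ (n - 1)"

definition disc_symmetric_BNE ::
  "auction_format \<Rightarrow> real measure \<Rightarrow> nat \<Rightarrow> real \<Rightarrow> real \<Rightarrow> nat \<Rightarrow> (real \<Rightarrow> real) \<Rightarrow> bool" where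
  "disc_symmetric_BNE fmt M n vl delta K beta \<longleftrightarrow>
     (\<forall>k \<in> {1..K}. \<forall>b \<in> disc_bids beta vl delta K.
        payoff fmt (disc_value vl delta k) b (disc_win_prob M n vl delta K beta b)
          \<le> payoff fmt (disc_value vl delta k) (beta (disc_value vl delta k))
               (disc_win_prob M n vl delta K beta (beta (disc_value vl delta k))))"

end

theory Submission
  imports Defs
begin

lemma cdf_at_vl:
  assumes distr: "real_distribution M"
    and cont_cdf: "\<And>x. isCont (cdf M) x"
    and supp_mass: "measure M {vl..vh} = 1"
  shows "cdf M vl = 0"
proof -
  interpret real_distribution M by (rule distr)
  have z: "measure M {vl} = 0" using cont_cdf isCont_cdf by blast
  have c: "measure M (space M - {vl..vh}) = 0"
    using prob_compl[of "{vl..vh}"] supp_mass by simp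
  have "cdf M vl = measure M {..vl}" by (simp add: cdf_def)
  also have "\<dots> \<le> measure M ((space M - {vl..vh}) \<union> {vl})"
    by (rule finite_measure_mono) (auto simp: borel_UNIV)
  also have "\<dots> \<le> measure M (space M - {vl..vh}) + measure M {vl}"
    by (rule measure_subadditive) (auto simp: borel_UNIV)
  finally have "cdf M vl \<le> 0" using z c by simp
  moreover have "cdf M vl \<ge> 0" by (rule cdf_nonneg)
  ultimately show ?thesis by simp
qed

lemma cont_win:
  assumes distr: "real_distribution M"
    and cont_cdf: "\<And>x. isCont (cdf M) x"
    and supp_mass: "measure M {vl..vh} = 1"
    and beta_mono: "strict_mono_on {vl..vh} beta"
    and w: "w \<in> {vl..vh}"
  shows "cont_win_prob M n vl vh beta (beta w) = (cdf M w) ^ (n - 1)"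
proof -
  interpret real_distribution M by (rule distr)
  have c0: "cdf M vl = 0" by (rule cdf_at_vl[OF distr cont_cdf supp_mass])
  have set: "{x \<in> {vl..vh}. beta x < beta w} = {vl..<w}"
  proof safe
    fix x assume x: "x \<in> {vl..vh}" "beta x < beta w"
    have "x < w"
    proof (rule ccontr)
      assume "\<not> x < w"
      hence "w \<le> x" by simp
      hence "beta w \<le> beta x"
        using strict_mono_on_leD[OF beta_mono w x(1)] by simp
      thus False using x by simp
    qed
    thus "x \<in> {vl..<w}" using x by auto
  next
    fix x assume x: "x \<in> {vl..<w}"
    thus "x \<in> {vl..vh}" using w by auto
    show "beta x < beta w"
      using x w by (intro strict_mono_onD[OF beta_mono]) auto
  qed
  have "measure M {vl..<w} = cdf M w"
  proof (cases "vl < w")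
    case False
    hence "w = vl" using w by auto
    thus ?thesis using c0 by simp
  next
    case True
    have zw: "measure M {w} = 0" using cont_cdf isCont_cdf by blast
    have zv: "measure M {vl} = 0" using cont_cdf isCont_cdf by blast
    have e: "{vl..<w} \<union> {w} = {vl} \<union> {vl<..w}" using True by auto
    have "measure M ({vl..<w} \<union> {w}) = measure M {vl..<w} + measure M {w}"
      by (rule finite_measure_Union) auto
    moreover have "measure M ({vl} \<union> {vl<..w}) = measure M {vl} + measure M {vl<..w}"
      by (rule finite_measure_Union) auto
    moreover have "measure M {vl<..w} = cdf M w - cdf M vl"
      using cdf_diff_eq[OF True] by simp
    ultimately show ?thesis using e zw zv c0 by simp
  qed
  thus ?thesis unfolding cont_win_prob_def using set by simp
qed

lemma telesc:
  fixes f :: "nat \<Rightarrow> real"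
  shows "(\<Sum>i\<in>{1..j}. f i - f (i - 1)) = f j - f 0"
  by (induction j) (auto simp: sum.atLeast1_atMost_eq)

lemma disc_win:
  assumes distr: "real_distribution M"
    and cont_cdf: "\<And>x. isCont (cdf M) x"
    and supp_mass: "measure M {vl..vh} = 1"
    and beta_mono: "strict_mono_on {vl..vh} beta"
    and delta_pos: "delta > 0"
    and K_def: "(vh - vl) / delta = real K"
    and j: "j \<le> K"
  shows "disc_win_prob M n vl delta K beta (beta (vl + real j * delta))
          = (cdf M (vl + real j * delta)) ^ (n - 1)"
proof -
  have c0: "cdf M vl = 0" by (rule cdf_at_vl[OF distr cont_cdf supp_mass])
  have vh: "vh = vl + real K * delta" using K_def delta_pos by (simp add: field_simps)
  have inr: "vl + real m * delta \<in> {vl..vh}" if "m \<le> K" for m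
    using that delta_pos vh by (auto intro!: mult_right_mono)
  have cond: "(beta (disc_value vl delta i) < beta (vl + real j * delta)) = (i \<le> j)"
    if i: "i \<in> {1..K}" for i
  proof -
    have dv: "disc_value vl delta i = vl + real (i - 1) * delta"
      using i by (simp add: disc_value_def of_nat_diff)
    have a: "vl + real (i - 1) * delta \<in> {vl..vh}" using i by (intro inr) auto
    have b: "vl + real j * delta \<in> {vl..vh}" using j by (intro inr)
    have "(beta (vl + real (i - 1) * delta) < beta (vl + real j * delta))
          = (vl + real (i - 1) * delta < vl + real j * delta)"
      using strict_mono_on_less[OF beta_mono a b] .
    also have "\<dots> = (real (i - 1) < real j)" using delta_pos by simp
    also have "\<dots> = (i \<le> j)" using i by auto
    finally show ?thesis using dv by simp
  qed
  have pm: "disc_pmf M vl delta i = cdf M (vl + real i * delta) - cdf M (vl + real (i - 1) * delta)"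
    if "i \<ge> 1" for i
    using that by (simp add: disc_pmf_def disc_cdf_def disc_value_def of_nat_diff algebra_simps)
  have "(\<Sum>i\<in>{1..K}. if beta (disc_value vl delta i) < beta (vl + real j * delta)
              then disc_pmf M vl delta i else 0)
        = (\<Sum>i\<in>{1..K}. if i \<le> j then disc_pmf M vl delta i else 0)"
    by (rule sum.cong) (auto simp: cond)
  also have "\<dots> = (\<Sum>i\<in>{1..K} \<inter> {i. i \<le> j}. disc_pmf M vl delta i)"
    by (simp add: sum.inter_restrict)
  also have "{1..K} \<inter> {i. i \<le> j} = {1..j}" using j by auto
  also have "(\<Sum>i\<in>{1..j}. disc_pmf M vl delta i)
      = (\<Sum>i\<in>{1..j}. cdf M (vl + real i * delta) - cdf M (vl + real (i - 1) * delta))"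
    by (rule sum.cong) (auto simp: pm)
  also have "\<dots> = cdf M (vl + real j * delta) - cdf M (vl + real 0 * delta)"
    by (rule telesc[where f = "\<lambda>i. cdf M (vl + real i * delta)"])
  finally show ?thesis unfolding disc_win_prob_def using c0 by simp
qed

theorem proposition5:
  fixes fmt :: auction_format and M :: "real measure" and n K :: nat
    and vl vh delta :: real and beta :: "real \<Rightarrow> real"
  assumes n2: "n \<ge> 2"
    and distr: "real_distribution M"
    and cont_cdf: "\<And>x. isCont (cdf M) x"
    and supp_mass: "measure M {vl..vh} = 1"
    and supp_full: "\<And>x e. x \<in> {vl..vh} \<Longrightarrow> e > 0 \<Longrightarrow> measure M {x - e<..<x + e} > 0"
    and beta_mono: "strict_mono_on {vl..vh} beta"
    and beta_nonneg: "\<And>v. v \<in> {vl..vh} \<Longrightarrow> beta v \<ge> 0"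
    and cont_eq: "cont_symmetric_BNE fmt M n vl vh beta"
    and delta_pos: "delta > 0"
    and K_pos: "K \<ge> 1"
    and K_def: "(vh - vl) / delta = real K"
  shows "disc_symmetric_BNE fmt M n vl delta K beta"
  unfolding disc_symmetric_BNE_def
proof (intro ballI)
  fix k b assume k: "k \<in> {1..K}" and b: "b \<in> disc_bids beta vl delta K"
  obtain j where j: "j \<le> K" and bj: "b = beta (vl + real j * delta)"
    using b unfolding disc_bids_def by auto
  have vh: "vh = vl + real K * delta" using K_def delta_pos by (simp add: field_simps)
  have inr: "vl + real m * delta \<in> {vl..vh}" if "m \<le> K" for m
    using that delta_pos vh by (auto intro!: mult_right_mono)
  have dv: "disc_value vl delta k = vl + real (k - 1) * delta"
    using k by (simp add: disc_value_def of_nat_diff)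
  define v where "v = vl + real (k - 1) * delta"
  have v: "v \<in> {vl..vh}" unfolding v_def using k by (intro inr) auto
  have bin: "vl + real j * delta \<in> {vl..vh}" using j by (rule inr)
  have b0: "b \<ge> 0" using bj beta_nonneg bin by simp
  have w1: "disc_win_prob M n vl delta K beta b = cont_win_prob M n vl vh beta b"
    using bj disc_win[OF distr cont_cdf supp_mass beta_mono delta_pos K_def j]
      cont_win[OF distr cont_cdf supp_mass beta_mono bin] by simp
  have w2: "disc_win_prob M n vl delta K beta (beta v) = cont_win_prob M n vl vh beta (beta v)"
  proof -
    have "k - 1 \<le> K" using k by auto
    from disc_win[OF distr cont_cdf supp_mass beta_mono delta_pos K_def this, of n]
    have "disc_win_prob M n vl delta K beta (beta v) = (cdf M v) ^ (n - 1)"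
      unfolding v_def .
    moreover have "cont_win_prob M n vl vh beta (beta v) = (cdf M v) ^ (n - 1)"
      by (rule cont_win[OF distr cont_cdf supp_mass beta_mono v])
    ultimately show ?thesis by simp
  qed
  have "payoff fmt v b (cont_win_prob M n vl vh beta b)
          \<le> payoff fmt v (beta v) (cont_win_prob M n vl vh beta (beta v))"
    using cont_eq v b0 unfolding cont_symmetric_BNE_def by blast
  thus "payoff fmt (disc_value vl delta k) b (disc_win_prob M n vl delta K beta b)
          \<le> payoff fmt (disc_value vl delta k) (beta (disc_value vl delta k))
               (disc_win_prob M n vl delta K beta (beta (disc_value vl delta k)))"
    using w1 w2 dv unfolding v_def by simp
qed

end
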